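(* Let $\phi\in L^2(-1,0)$ and $T>1$, and consider the control problem $$\dot x(t)=x(t-1)+\int_{-1}^0x(t+\tau)\phi(\tau)\,d\tau+u(t),\ t>0,\qquad x(t)=x_0(t),\ t\in(-1,0),\ x(0)=\xi,$$ with initial data $\vec x=(\xi,x_0)\in\mathcal M=\mathbb C\times L^2(-1,0)$. The optimal control depends linearly on the initial data: if $u_1$ and $u_2$ are solutions of the problem $\|u\|_{L^2(0,T)}\to\min$, $u\in U(\vec x;T)$, for $\vec x=\vec x_1$ and $\vec x=\vec x_2$ respectively, then $u_1+u_2$ solves this problem for $\vec x=\vec x_1+\vec x_2$.
   Context: For $u\in L^2(0,T)$ the solution $x(t;\vec x,u)$ is the function equal to $x_0$ on $(-1,0)$ and, for $t\ge0$, absolutely continuous with $x(t)=\xi+\int_0^t\big[x(s-1)+\int_{-1}^0x(s+\tau)\phi(\tau)d\tau+u(s)\big]ds$. $U(\vec x;T)$ is the set of all $u\in L^2(0,T)$ such that $x(t;\vec x,u)=0$ for $t\in(T-1,T)$. *)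

theory Defs
  imports "HOL-Analysis.Analysis"
begin

definition L2_on :: "real set \<Rightarrow> (real \<Rightarrow> complex) \<Rightarrow> bool" where
  "L2_on A f \<longleftrightarrow> set_borel_measurable lborel A f \<and>
                  set_integrable lborel A (\<lambda>t. (cmod (f t))\<^sup>2)"

definition L2_norm_sq :: "real \<Rightarrow> (real \<Rightarrow> complex) \<Rightarrow> real" where
  "L2_norm_sq T u = (LINT t:{0<..<T}|lborel. (cmod (u t))\<^sup>2)"

text \<open>x is the solution on (-1,T] of the delay system with kernel phi, initial data (xi, x0),
  and control u: x = x0 on (-1,0) and, for t in [0,T],
  x(t) = xi + int_0^t [x(s-1) + int_{-1}^0 x(s+tau) phi(tau) dtau + u(s)] ds
  (with all integrands integrable, so x is absolutely continuous on [0,T]).\<close>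
definition is_solution ::
  "(real \<Rightarrow> complex) \<Rightarrow> real \<Rightarrow> complex \<Rightarrow> (real \<Rightarrow> complex) \<Rightarrow> (real \<Rightarrow> complex)
     \<Rightarrow> (real \<Rightarrow> complex) \<Rightarrow> bool" where
  "is_solution \<phi> T \<xi> x0 u x \<longleftrightarrow>
     (\<forall>t\<in>{-1<..<0}. x t = x0 t) \<and>
     (\<forall>s\<in>{0..T}. set_integrable lborel {-1<..<0} (\<lambda>\<tau>. x (s + \<tau>) * \<phi> \<tau>)) \<and>
     set_integrable lborel {0..T}
       (\<lambda>s. x (s - 1) + (LINT \<tau>:{-1<..<0}|lborel. x (s + \<tau>) * \<phi> \<tau>) + u s) \<and>
     (\<forall>t\<in>{0..T}. x t = \<xi> + (LINT s:{0..t}|lborel.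
        x (s - 1) + (LINT \<tau>:{-1<..<0}|lborel. x (s + \<tau>) * \<phi> \<tau>) + u s))"

definition U_set :: "(real \<Rightarrow> complex) \<Rightarrow> real \<Rightarrow> complex \<Rightarrow> (real \<Rightarrow> complex)
     \<Rightarrow> (real \<Rightarrow> complex) set" where
  "U_set \<phi> T \<xi> x0 = {u. L2_on {0<..<T} u \<and>
      (\<exists>x. is_solution \<phi> T \<xi> x0 u x \<and> (\<forall>t\<in>{T-1<..<T}. x t = 0))}"

definition optimal_control :: "(real \<Rightarrow> complex) \<Rightarrow> real \<Rightarrow> complex \<Rightarrow> (real \<Rightarrow> complex)
     \<Rightarrow> (real \<Rightarrow> complex) \<Rightarrow> bool" where
  "optimal_control \<phi> T \<xi> x0 u \<longleftrightarrow> u \<in> U_set \<phi> T \<xi> x0 \<and>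
      (\<forall>v\<in>U_set \<phi> T \<xi> x0. L2_norm_sq T u \<le> L2_norm_sq T v)"

end

theory Submission imports Defs begin
lemma sbm_lin:
  fixes f g :: "real \<Rightarrow> complex" and a b :: complex
  assumes "set_borel_measurable lborel A f" "set_borel_measurable lborel A g"
  shows "set_borel_measurable lborel A (\<lambda>t. a * f t + b * g t)"
proof -
  have e: "(\<lambda>x. indicator A x *\<^sub>R (a * f x + b * g x)) =
     (\<lambda>x. a * (indicator A x *\<^sub>R f x) + b * (indicator A x *\<^sub>R g x))"
    by (rule ext) (simp split: split_indicator)
  show ?thesis using assms unfolding set_borel_measurable_def e by measurable
qed

lemma sbm_re:
  assumes "set_borel_measurable lborel A f" "set_borel_measurable lborel A g"
  shows "set_borel_measurable lborel A (\<lambda>t. Re (f t * cnj (g t)))"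
proof -
  have e: "(\<lambda>x. indicator A x *\<^sub>R Re (f x * cnj (g x))) =
     (\<lambda>x. Re (indicator A x *\<^sub>R f x) * Re (indicator A x *\<^sub>R g x) + Im (indicator A x *\<^sub>R f x) * Im (indicator A x *\<^sub>R g x))"
    by (auto split: split_indicator)
  show ?thesis using assms unfolding set_borel_measurable_def e by measurable
qed

lemma sbm_sq:
  assumes "set_borel_measurable lborel A f"
  shows "set_borel_measurable lborel A (\<lambda>t. (cmod (f t))\<^sup>2)"
proof -
  have e: "(\<lambda>x. indicator A x *\<^sub>R (cmod (f x))\<^sup>2) =
     (\<lambda>x. (cmod (indicator A x *\<^sub>R f x))\<^sup>2)"
    by (auto simp: indicator_def)
  show ?thesis using assms unfolding set_borel_measurable_def e by measurable
qed

lemma L2_lin: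
  fixes f g :: "real \<Rightarrow> complex" and a b :: complex
  assumes "L2_on A f" "L2_on A g"
  shows "L2_on A (\<lambda>t. a * f t + b * g t)"
proof -
  have m: "set_borel_measurable lborel A (\<lambda>t. a * f t + b * g t)"
    using assms sbm_lin unfolding L2_on_def by blast
  have i: "set_integrable lborel A (\<lambda>t. 2 * (cmod a)\<^sup>2 * (cmod (f t))\<^sup>2 + 2 * (cmod b)\<^sup>2 * (cmod (g t))\<^sup>2)"
    using assms unfolding L2_on_def by (intro set_integral_add set_integrable_mult_right) auto
  have b: "norm ((cmod (a * f t + b * g t))\<^sup>2) \<le> norm (2 * (cmod a)\<^sup>2 * (cmod (f t))\<^sup>2 + 2 * (cmod b)\<^sup>2 * (cmod (g t))\<^sup>2)" for t
  proof -
    have "cmod (a * f t + b * g t) \<le> cmod a * cmod (f t) + cmod b * cmod (g t)"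
      by (metis norm_mult norm_triangle_ineq)
    then have "(cmod (a * f t + b * g t))\<^sup>2 \<le> (cmod a * cmod (f t) + cmod b * cmod (g t))\<^sup>2"
      by (simp add: power_mono)
    also have "\<dots> \<le> 2 * (cmod a)\<^sup>2 * (cmod (f t))\<^sup>2 + 2 * (cmod b)\<^sup>2 * (cmod (g t))\<^sup>2"
    proof -
      define p where "p = cmod a * cmod (f t)"
      define q where "q = cmod b * cmod (g t)"
      have "(p+q)^2 = 2*p^2+2*q^2 - (p-q)^2" by (simp add: power2_eq_square algebra_simps)
      moreover have "0 \<le> (p-q)^2" by simp
      ultimately have "(p+q)^2 \<le> 2*p^2+2*q^2" by linarith
      then show ?thesis unfolding p_def q_def by (simp add: power_mult_distrib)
    qed
    finally show ?thesis by simp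
  qed
  have "set_integrable lborel A (\<lambda>t. (cmod (a * f t + b * g t))\<^sup>2)"
    by (rule set_integrable_bound[OF i sbm_sq[OF m]]) (use b in auto)
  with m show ?thesis unfolding L2_on_def by blast
qed

lemma L2_re:
  assumes "L2_on A f" "L2_on A g"
  shows "set_integrable lborel A (\<lambda>t. Re (f t * cnj (g t)))"
proof -
  have i: "set_integrable lborel A (\<lambda>t. (cmod (f t))\<^sup>2 + (cmod (g t))\<^sup>2)"
    using assms unfolding L2_on_def by auto
  have b: "norm (Re (f t * cnj (g t))) \<le> norm ((cmod (f t))\<^sup>2 + (cmod (g t))\<^sup>2)" for t
  proof -
    have "\<bar>Re (f t * cnj (g t))\<bar> \<le> cmod (f t) * cmod (g t)"
      by (metis abs_Re_le_cmod complex_mod_cnj norm_mult)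
    also have "\<dots> \<le> (cmod (f t))\<^sup>2 + (cmod (g t))\<^sup>2"
    proof -
      have "2 * (cmod (f t) * cmod (g t)) \<le> (cmod (f t))\<^sup>2 + (cmod (g t))\<^sup>2"
        using sum_squares_bound[of "cmod (f t)" "cmod (g t)"] by (simp add: mult.assoc)
      moreover have "0 \<le> cmod (f t) * cmod (g t)" by simp
      ultimately show ?thesis by linarith
    qed
    finally show ?thesis by simp
  qed
  show ?thesis
    by (rule set_integrable_bound[OF i sbm_re]) (use assms b in \<open>auto simp: L2_on_def\<close>)
qed

lemma sol_lin:
  fixes a b :: complex
  assumes A: "is_solution \<phi> T \<xi>a xa ua ya" and B: "is_solution \<phi> T \<xi>b xb ub yb"
  shows "is_solution \<phi> T (a*\<xi>a + b*\<xi>b) (\<lambda>t. a*xa t + b*xb t) (\<lambda>t. a*ua t + b*ub t) (\<lambda>t. a*ya t + b*yb t)"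
proof -
  define Fa where "Fa s = ya (s - 1) + (LINT \<tau>:{-1<..<0}|lborel. ya (s + \<tau>) * \<phi> \<tau>) + ua s" for s
  define Fb where "Fb s = yb (s - 1) + (LINT \<tau>:{-1<..<0}|lborel. yb (s + \<tau>) * \<phi> \<tau>) + ub s" for s
  note A' = A[unfolded is_solution_def, folded Fa_def]
  note B' = B[unfolded is_solution_def, folded Fb_def]
  have ia: "set_integrable lborel {-1<..<0} (\<lambda>\<tau>. ya (s + \<tau>) * \<phi> \<tau>)"
    and ib: "set_integrable lborel {-1<..<0} (\<lambda>\<tau>. yb (s + \<tau>) * \<phi> \<tau>)" if "s \<in> {0..T}" for s
    using A' B' that by auto
  have e1: "(\<lambda>\<tau>. (a * ya (s + \<tau>) + b * yb (s + \<tau>)) * \<phi> \<tau>) =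
       (\<lambda>\<tau>. a * (ya (s + \<tau>) * \<phi> \<tau>) + b * (yb (s + \<tau>) * \<phi> \<tau>))" for s
    by (auto simp: algebra_simps)
  have I1: "set_integrable lborel {-1<..<0} (\<lambda>\<tau>. (a * ya (s + \<tau>) + b * yb (s + \<tau>)) * \<phi> \<tau>)"
    if "s \<in> {0..T}" for s
    unfolding e1 using ia[OF that] ib[OF that] by (intro set_integral_add set_integrable_mult_right) auto
  have I2: "(LINT \<tau>:{-1<..<0}|lborel. (a * ya (s + \<tau>) + b * yb (s + \<tau>)) * \<phi> \<tau>) =
      a * (LINT \<tau>:{-1<..<0}|lborel. ya (s + \<tau>) * \<phi> \<tau>) + b * (LINT \<tau>:{-1<..<0}|lborel. yb (s + \<tau>) * \<phi> \<tau>)"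
    if "s \<in> {0..T}" for s
    unfolding e1 using ia[OF that] ib[OF that] by (subst set_integral_add) auto
  have F: "(a * ya (s - 1) + b * yb (s - 1)) + (LINT \<tau>:{-1<..<0}|lborel. (a * ya (s + \<tau>) + b * yb (s + \<tau>)) * \<phi> \<tau>)
      + (a * ua s + b * ub s) = a * Fa s + b * Fb s" if "s \<in> {0..T}" for s
    using I2[OF that] unfolding Fa_def Fb_def by (simp add: algebra_simps)
  have FI: "set_integrable lborel {0..T} (\<lambda>s. a * Fa s + b * Fb s)"
    using A' B' by (intro set_integral_add set_integrable_mult_right) auto
  have FI': "set_integrable lborel {0..T} (\<lambda>s. (a * ya (s - 1) + b * yb (s - 1)) + (LINT \<tau>:{-1<..<0}|lborel. (a * ya (s + \<tau>) + b * yb (s + \<tau>)) * \<phi> \<tau>)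
      + (a * ua s + b * ub s))"
    using FI by (subst set_integrable_cong[OF refl refl F]) auto
  have L: "a * \<xi>a + b * \<xi>b + (LINT s:{0..t}|lborel. (a * ya (s - 1) + b * yb (s - 1)) + (LINT \<tau>:{-1<..<0}|lborel. (a * ya (s + \<tau>) + b * yb (s + \<tau>)) * \<phi> \<tau>)
      + (a * ua s + b * ub s)) = a * ya t + b * yb t" if t: "t \<in> {0..T}" for t
  proof -
    have sub: "{0..t} \<subseteq> {0..T}" using t by auto
    have "(LINT s:{0..t}|lborel. (a * ya (s - 1) + b * yb (s - 1)) + (LINT \<tau>:{-1<..<0}|lborel. (a * ya (s + \<tau>) + b * yb (s + \<tau>)) * \<phi> \<tau>)
      + (a * ua s + b * ub s)) = (LINT s:{0..t}|lborel. a * Fa s + b * Fb s)"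
      by (rule set_lebesgue_integral_cong) (use F sub in auto)
    also have "\<dots> = a * (LINT s:{0..t}|lborel. Fa s) + b * (LINT s:{0..t}|lborel. Fb s)"
    proof -
      have "set_integrable lborel {0..t} Fa" "set_integrable lborel {0..t} Fb"
        using A' B' sub by (auto intro: set_integrable_subset)
      then show ?thesis by (subst set_integral_add) auto
    qed
    finally show ?thesis using A' B' t by (simp add: algebra_simps)
  qed
  show ?thesis unfolding is_solution_def
    using A' B' I1 FI' L by (auto simp: algebra_simps)
qed

lemma quad:
  fixes a p c :: real
  assumes "\<And>r. a \<le> a + 2*r*p + r^2*c" "c \<ge> 0"
  shows "p = 0"
proof -
  define r where "r = -p/(c+1)"
  have "0 \<le> 2*r*p + r^2*c" using assms(1)[of r] by linarith
  then have "0 \<le> (c+1)^2 * (2*r*p + r^2*c)" using assms(2) by simp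
  also have "\<dots> = 2*p*(c+1)*(r*(c+1)) + c*(r*(c+1))^2"
    by (simp add: power2_eq_square algebra_simps)
  also have "r*(c+1) = -p" unfolding r_def using assms(2) by simp
  also have "2*p*(c+1)*(-p) + c*(-p)^2 = -(p^2)*(c+2)"
    by (simp add: power2_eq_square algebra_simps)
  finally have "p^2*(c+2) \<le> 0" by linarith
  moreover have "c + 2 > 0" using assms(2) by linarith
  ultimately have "p^2 \<le> 0" by (simp add: mult_le_0_iff)
  then show ?thesis by simp
qed

lemma pt: "(cmod (u + w))\<^sup>2 = (cmod u)\<^sup>2 + 2 * Re (u * cnj w) + (cmod w)\<^sup>2"
  unfolding cmod_power2 by (simp add: power2_eq_square algebra_simps)

lemma pt2: "(cmod (u + of_real r * w))\<^sup>2 = (cmod u)\<^sup>2 + 2 * r * Re (u * cnj w) + r^2 * (cmod w)\<^sup>2"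
  unfolding cmod_power2 by (simp add: power2_eq_square algebra_simps)

lemma sol_lin':
  fixes a b :: complex
  assumes "is_solution \<phi> T \<xi>a xa ua ya" "is_solution \<phi> T \<xi>b xb ub yb"
    "\<xi> = a*\<xi>a + b*\<xi>b" "x0 = (\<lambda>t. a*xa t + b*xb t)" "u = (\<lambda>t. a*ua t + b*ub t)"
    "y = (\<lambda>t. a*ya t + b*yb t)"
  shows "is_solution \<phi> T \<xi> x0 u y"
  using sol_lin[OF assms(1,2), of a b] assms(3-) by simp

lemma L2_lin':
  fixes a b :: complex
  assumes "L2_on A f" "L2_on A g" "h = (\<lambda>t. a * f t + b * g t)"
  shows "L2_on A h"
  using L2_lin[OF assms(1,2), of a b] assms(3) by simp

definition ipr :: "real \<Rightarrow> (real \<Rightarrow> complex) \<Rightarrow> (real \<Rightarrow> complex) \<Rightarrow> real" where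
  "ipr T u w = (LINT t:{0<..<T}|lborel. Re (u t * cnj (w t)))"

lemma norm_exp:
  assumes "L2_on {0<..<T} u" "L2_on {0<..<T} w"
  shows "L2_norm_sq T (\<lambda>t. u t + of_real r * w t) = L2_norm_sq T u + 2 * r * ipr T u w + r^2 * L2_norm_sq T w"
proof -
  have i1: "set_integrable lborel {0<..<T} (\<lambda>t. (cmod (u t))\<^sup>2)"
    and i2: "set_integrable lborel {0<..<T} (\<lambda>t. (cmod (w t))\<^sup>2)"
    using assms unfolding L2_on_def by auto
  have i3: "set_integrable lborel {0<..<T} (\<lambda>t. Re (u t * cnj (w t)))"
    using L2_re[OF assms] .
  have "L2_norm_sq T (\<lambda>t. u t + of_real r * w t) =
     (LINT t:{0<..<T}|lborel. (cmod (u t))\<^sup>2 + (2 * r * Re (u t * cnj (w t)) + r^2 * (cmod (w t))\<^sup>2))"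
    unfolding L2_norm_sq_def pt2 by (simp add: add.assoc)
  also have "\<dots> = L2_norm_sq T u + 2 * r * ipr T u w + r^2 * L2_norm_sq T w"
    unfolding L2_norm_sq_def ipr_def using i1 i2 i3
    by (subst set_integral_add, simp, (intro set_integral_add set_integrable_mult_right; simp),
        subst set_integral_add, auto)
  finally show ?thesis .
qed

lemma ipr_add:
  assumes "L2_on {0<..<T} u1" "L2_on {0<..<T} u2" "L2_on {0<..<T} w"
  shows "ipr T (\<lambda>t. u1 t + u2 t) w = ipr T u1 w + ipr T u2 w"
proof -
  have "ipr T (\<lambda>t. u1 t + u2 t) w = (LINT t:{0<..<T}|lborel. Re (u1 t * cnj (w t)) + Re (u2 t * cnj (w t)))"
    unfolding ipr_def by (simp add: algebra_simps)
  also have "\<dots> = ipr T u1 w + ipr T u2 w"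
    unfolding ipr_def using L2_re[OF assms(1,3)] L2_re[OF assms(2,3)] by (subst set_integral_add) auto
  finally show ?thesis .
qed

lemma norm_nonneg: "L2_norm_sq T w \<ge> 0"
  unfolding L2_norm_sq_def set_lebesgue_integral_def
  by (rule integral_nonneg_AE) (auto split: split_indicator)

lemma orth:
  assumes opt: "optimal_control \<phi> T \<xi> x0 u"
    and w: "L2_on {0<..<T} w" and y: "is_solution \<phi> T 0 (\<lambda>_. 0) w y"
    and y0: "\<forall>t\<in>{T-1<..<T}. y t = 0"
  shows "ipr T u w = 0"
proof -
  from opt obtain x where u: "L2_on {0<..<T} u" and x: "is_solution \<phi> T \<xi> x0 u x"
    and x0: "\<forall>t\<in>{T-1<..<T}. x t = 0"
    and mn: "\<And>v. v \<in> U_set \<phi> T \<xi> x0 \<Longrightarrow> L2_norm_sq T u \<le> L2_norm_sq T v"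
    unfolding optimal_control_def U_set_def by blast
  have "L2_norm_sq T u \<le> L2_norm_sq T u + 2 * r * ipr T u w + r^2 * L2_norm_sq T w" for r
  proof -
    have "(\<lambda>t. u t + of_real r * w t) \<in> U_set \<phi> T \<xi> x0"
      unfolding U_set_def
    proof (intro CollectI conjI exI)
      show "L2_on {0<..<T} (\<lambda>t. u t + of_real r * w t)"
        by (rule L2_lin'[OF u w, of _ 1 "of_real r"]) simp
      show "is_solution \<phi> T \<xi> x0 (\<lambda>t. u t + of_real r * w t) (\<lambda>t. x t + of_real r * y t)"
        by (rule sol_lin'[OF x y, of _ 1 "of_real r"]) auto
      show "\<forall>t\<in>{T-1<..<T}. x t + of_real r * y t = 0" using x0 y0 by simp
    qed
    from mn[OF this] show ?thesis using norm_exp[OF u w] by simp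
  qed
  then show ?thesis by (rule quad) (rule norm_nonneg)
qed

theorem corollary1:
  fixes \<phi> x01 x02 u1 u2 :: "real \<Rightarrow> complex" and \<xi>1 \<xi>2 :: complex and T :: real
  assumes "L2_on {-1<..<0} \<phi>" and "T > 1"
    and "L2_on {-1<..<0} x01" and "L2_on {-1<..<0} x02"
    and "optimal_control \<phi> T \<xi>1 x01 u1"
    and "optimal_control \<phi> T \<xi>2 x02 u2"
  shows "optimal_control \<phi> T (\<xi>1 + \<xi>2) (\<lambda>t. x01 t + x02 t) (\<lambda>t. u1 t + u2 t)"
proof -
  note o1 = assms(5) and o2 = assms(6)
  from o1 obtain x1 where u1: "L2_on {0<..<T} u1" and x1: "is_solution \<phi> T \<xi>1 x01 u1 x1"
    and x10: "\<forall>t\<in>{T-1<..<T}. x1 t = 0"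
    unfolding optimal_control_def U_set_def by blast
  from o2 obtain x2 where u2: "L2_on {0<..<T} u2" and x2: "is_solution \<phi> T \<xi>2 x02 u2 x2"
    and x20: "\<forall>t\<in>{T-1<..<T}. x2 t = 0"
    unfolding optimal_control_def U_set_def by blast
  have uL: "L2_on {0<..<T} (\<lambda>t. u1 t + u2 t)"
    by (rule L2_lin'[OF u1 u2, of _ 1 1]) simp
  have S: "is_solution \<phi> T (\<xi>1 + \<xi>2) (\<lambda>t. x01 t + x02 t) (\<lambda>t. u1 t + u2 t) (\<lambda>t. x1 t + x2 t)"
    by (rule sol_lin'[OF x1 x2, of _ 1 1]) auto
  have mem: "(\<lambda>t. u1 t + u2 t) \<in> U_set \<phi> T (\<xi>1 + \<xi>2) (\<lambda>t. x01 t + x02 t)"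
    unfolding U_set_def using uL S x10 x20 by auto
  have "L2_norm_sq T (\<lambda>t. u1 t + u2 t) \<le> L2_norm_sq T v"
    if v: "v \<in> U_set \<phi> T (\<xi>1 + \<xi>2) (\<lambda>t. x01 t + x02 t)" for v
  proof -
    from v obtain z where vL: "L2_on {0<..<T} v"
      and z: "is_solution \<phi> T (\<xi>1 + \<xi>2) (\<lambda>t. x01 t + x02 t) v z"
      and z0: "\<forall>t\<in>{T-1<..<T}. z t = 0"
      unfolding U_set_def by blast
    define w where "w = (\<lambda>t. v t - (u1 t + u2 t))"
    have wL: "L2_on {0<..<T} w"
      by (rule L2_lin'[OF vL uL, of _ 1 "-1"]) (simp add: w_def algebra_simps)
    have y: "is_solution \<phi> T 0 (\<lambda>_. 0) w (\<lambda>t. z t - (x1 t + x2 t))"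
      by (rule sol_lin'[OF z S, of _ 1 "-1"]) (auto simp: w_def)
    have y0: "\<forall>t\<in>{T-1<..<T}. z t - (x1 t + x2 t) = 0" using z0 x10 x20 by simp
    have p1: "ipr T u1 w = 0" by (rule orth[OF o1 wL y y0])
    have p2: "ipr T u2 w = 0" by (rule orth[OF o2 wL y y0])
    have ve: "v = (\<lambda>t. (u1 t + u2 t) + of_real 1 * w t)" by (simp add: w_def)
    have "L2_norm_sq T v = L2_norm_sq T (\<lambda>t. u1 t + u2 t) + 2 * 1 * ipr T (\<lambda>t. u1 t + u2 t) w + 1^2 * L2_norm_sq T w"
      unfolding ve by (rule norm_exp[OF uL wL])
    also have "ipr T (\<lambda>t. u1 t + u2 t) w = 0" using ipr_add[OF u1 u2 wL] p1 p2 by simp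
    finally show ?thesis using norm_nonneg[of T w] by simp
  qed
  with mem show ?thesis unfolding optimal_control_def by blast
qed

end
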